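(* Let $n_0,n_1$ be positive integers and $r>1$ an integer. A subset $\mathcal{Z}\subseteq\{1,2,\dots,r-1\}$ is admissible for $(n_0,n_1,r)$ if and only if there exists a pair of integer sequences $(y_\ell)_{\ell\ge0},(z_\ell)_{\ell\ge0}$ satisfying: (C1) $y_\ell\le n_0y_{\ell-1}+n_1z_{\ell-1}$ and $z_\ell\le n_1y_{\ell-1}+n_0z_{\ell-1}$ for every $\ell\ge1$; (C2) $y_{r-1}+z_{r-1}>0$; (C3) $y_\ell=z_\ell=0$ for $\ell\ge r$; (C4) $y_0=1$ and $z_0=0$; (C5) $\min\{y_\ell,z_\ell\}<0$ if and only if $\ell\in\mathcal{Z}$.
   Context: For integers $n,\ell>0$ and a finite-support integer sequence $\mu=(\mu_i)_{i\ge1}$, $\mathsf{K}_\ell(\mu,n)=n^\ell-\sum_{i=1}^{\ell}\mu_i n^{\ell-i}$ (with $0^0=1$). For a pair $(\eta,\omega)$ of nonnegative integer sequences $(\eta_\ell)_{\ell\ge1},(\omega_\ell)_{\ell\ge1}$ with finite support, let $\mathsf{K}^\pm_\ell=\mathsf{K}_\ell(\eta\pm\omega,n_0\pm n_1)$, let $\mathsf{r}(\eta,\omega)$ be the largest index in the union of their supports, and $\mathsf{K}^\pm=\mathsf{K}^\pm_{\mathsf{r}(\eta,\omega)}$. A subset $\mathcal{Z}\subseteq\{1,\dots,r-1\}$ is admissible for $(n_0,n_1,r)$ if there exists such a pair $(\eta,\omega)$ with $\mathsf{r}(\eta,\omega)=r$ and $\mathsf{K}^+=\mathsf{K}^-=0$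 such that, for $\ell\in\{1,\dots,r-1\}$, the inequality $\mathsf{K}^+_\ell\ge|\mathsf{K}^-_\ell|$ fails exactly when $\ell\in\mathcal{Z}$. *)

theory Defs
  imports Main
begin

definition Kfun :: "nat \<Rightarrow> (nat \<Rightarrow> int) \<Rightarrow> int \<Rightarrow> int" where
  "Kfun l mu n = n ^ l - (\<Sum>i=1..l. mu i * n ^ (l - i))"

text \<open>Sequences indexed by l >= 1 are modelled as nat => int; the value at 0 is ignored.\<close>
definition supp1 :: "(nat \<Rightarrow> int) \<Rightarrow> nat set" where
  "supp1 f = {l. 1 \<le> l \<and> f l \<noteq> 0}"

definition valid_pair :: "(nat \<Rightarrow> int) \<Rightarrow> (nat \<Rightarrow> int) \<Rightarrow> bool" where
  "valid_pair eta omega \<longleftrightarrow>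
     (\<forall>l\<ge>1. eta l \<ge> 0 \<and> omega l \<ge> 0) \<and> finite (supp1 eta) \<and> finite (supp1 omega)"

definition rank_is :: "(nat \<Rightarrow> int) \<Rightarrow> (nat \<Rightarrow> int) \<Rightarrow> nat \<Rightarrow> bool" where
  "rank_is eta omega r \<longleftrightarrow>
     r \<in> supp1 eta \<union> supp1 omega \<and> (\<forall>l \<in> supp1 eta \<union> supp1 omega. l \<le> r)"

definition Kplus :: "(nat \<Rightarrow> int) \<Rightarrow> (nat \<Rightarrow> int) \<Rightarrow> int \<Rightarrow> int \<Rightarrow> nat \<Rightarrow> int" where
  "Kplus eta omega n0 n1 l = Kfun l (\<lambda>i. eta i + omega i) (n0 + n1)"

definition Kminus :: "(nat \<Rightarrow> int) \<Rightarrow> (nat \<Rightarrow> int) \<Rightarrow> int \<Rightarrow> int \<Rightarrow> nat \<Rightarrow> int" where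
  "Kminus eta omega n0 n1 l = Kfun l (\<lambda>i. eta i - omega i) (n0 - n1)"

definition admissible :: "int \<Rightarrow> int \<Rightarrow> nat \<Rightarrow> nat set \<Rightarrow> bool" where
  "admissible n0 n1 r Z \<longleftrightarrow> Z \<subseteq> {1..r-1} \<and>
     (\<exists>eta omega. valid_pair eta omega \<and> rank_is eta omega r \<and>
        Kplus eta omega n0 n1 r = 0 \<and> Kminus eta omega n0 n1 r = 0 \<and>
        (\<forall>l\<in>{1..r-1}. (\<not> (Kplus eta omega n0 n1 l \<ge> \<bar>Kminus eta omega n0 n1 l\<bar>)) \<longleftrightarrow> l \<in> Z))"

end

theory Submission
  imports Defs
begin

lemma Kfun_0: "Kfun 0 mu n = 1"
  by (simp add: Kfun_def)

lemma Kfun_Suc: "Kfun (Suc l) mu n = n * Kfun l mu n - mu (Suc l)"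
proof -
  have "(\<Sum>i=1..Suc l. mu i * n ^ (Suc l - i)) = (\<Sum>i=1..l. mu i * n ^ (Suc l - i)) + mu (Suc l)"
    by simp
  also have "(\<Sum>i=1..l. mu i * n ^ (Suc l - i)) = n * (\<Sum>i=1..l. mu i * n ^ (l - i))"
    unfolding sum_distrib_left
    by (rule sum.cong) (auto simp: Suc_diff_le algebra_simps)
  finally show ?thesis by (simp add: Kfun_def algebra_simps)
qed

lemma KYZ:
  assumes "y 0 = 1" "z 0 = 0"
    "\<forall>l\<ge>1. eta l = n0*y(l-1)+n1*z(l-1) - y l"
    "\<forall>l\<ge>1. omega l = n1*y(l-1)+n0*z(l-1) - z l"
  shows "Kplus eta omega n0 n1 l = y l + z l \<and> Kminus eta omega n0 n1 l = y l - z l"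
proof (induction l)
  case 0
  then show ?case using assms by (simp add: Kplus_def Kminus_def Kfun_0)
next
  case (Suc l)
  have e: "eta (Suc l) = n0*y l+n1*z l - y (Suc l)" "omega (Suc l) = n1*y l+n0*z l - z (Suc l)"
    using assms(3,4) by auto
  have a: "Kfun l (\<lambda>i. eta i + omega i) (n0 + n1) = y l + z l"
    "Kfun l (\<lambda>i. eta i - omega i) (n0 - n1) = y l - z l"
    using Suc by (auto simp: Kplus_def Kminus_def)
  show ?case unfolding Kplus_def Kminus_def Kfun_Suc a e
    by (simp add: algebra_simps)
qed

fun YZ :: "int \<Rightarrow> int \<Rightarrow> (nat \<Rightarrow> int) \<Rightarrow> (nat \<Rightarrow> int) \<Rightarrow> nat \<Rightarrow> int \<times> int" where
  "YZ n0 n1 eta omega 0 = (1, 0)"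
| "YZ n0 n1 eta omega (Suc l) = (case YZ n0 n1 eta omega l of (a, b) \<Rightarrow>
      (n0*a + n1*b - eta (Suc l), n1*a + n0*b - omega (Suc l)))"

lemma minlt: "(min (a::int) b < 0) \<longleftrightarrow> \<not> (a + b \<ge> \<bar>a - b\<bar>)"
  by (auto simp: abs_if min_def)

theorem lemma4:
  fixes n0 n1 :: int and r :: nat and Z :: "nat set"
  assumes "n0 > 0" and "n1 > 0" and "r > 1" and "Z \<subseteq> {1..r-1}"
  shows "admissible n0 n1 r Z \<longleftrightarrow>
    (\<exists>y z :: nat \<Rightarrow> int.
       (\<forall>l\<ge>1. y l \<le> n0 * y (l - 1) + n1 * z (l - 1) \<and> z l \<le> n1 * y (l - 1) + n0 * z (l - 1)) \<and>
       y (r - 1) + z (r - 1) > 0 \<and>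
       (\<forall>l\<ge>r. y l = 0 \<and> z l = 0) \<and>
       y 0 = 1 \<and> z 0 = 0 \<and>
       (\<forall>l. min (y l) (z l) < 0 \<longleftrightarrow> l \<in> Z))"
proof
  assume "admissible n0 n1 r Z"
  then obtain eta omega where vp: "valid_pair eta omega" and rk: "rank_is eta omega r"
    and kp: "Kplus eta omega n0 n1 r = 0" and km: "Kminus eta omega n0 n1 r = 0"
    and cz: "\<forall>l\<in>{1..r-1}. (\<not> (Kplus eta omega n0 n1 l \<ge> \<bar>Kminus eta omega n0 n1 l\<bar>)) \<longleftrightarrow> l \<in> Z"
    unfolding admissible_def by blast
  define Y where "Y l = fst (YZ n0 n1 eta omega l)" for l
  define W where "W l = snd (YZ n0 n1 eta omega l)" for l
  have Y0: "Y 0 = 1" "W 0 = 0" by (simp_all add: Y_def W_def)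
  have YS: "Y (Suc l) = n0*Y l + n1*W l - eta (Suc l)" "W (Suc l) = n1*Y l + n0*W l - omega (Suc l)" for l
    by (simp_all add: Y_def W_def split: prod.split)
  have r1: "\<forall>l\<ge>1. eta l = n0*Y(l-1)+n1*W(l-1) - Y l"
    "\<forall>l\<ge>1. omega l = n1*Y(l-1)+n0*W(l-1) - W l"
  proof (safe)
    fix l :: nat assume "1 \<le> l"
    then obtain k where "l = Suc k" by (cases l) auto
    then show "eta l = n0*Y(l-1)+n1*W(l-1) - Y l" "omega l = n1*Y(l-1)+n0*W(l-1) - W l"
      using YS[of k] by auto
  qed
  have K: "Kplus eta omega n0 n1 l = Y l + W l \<and> Kminus eta omega n0 n1 l = Y l - W l" for l
    using KYZ[OF Y0 r1] .
  have Yr: "Y r = 0" "W r = 0" using K[of r] kp km by auto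
  have nn: "eta l \<ge> 0" "omega l \<ge> 0" if "l \<ge> 1" for l
    using vp that unfolding valid_pair_def by auto
  have rpos: "eta r + omega r > 0"
  proof -
    have "r \<in> supp1 eta \<union> supp1 omega" using rk unfolding rank_is_def by auto
    then have "eta r \<noteq> 0 \<or> omega r \<noteq> 0" unfolding supp1_def by auto
    then show ?thesis using nn[of r] assms(3) by linarith
  qed
  obtain q where rq: "r = Suc q" using assms(3) by (cases r) auto
  have "Y r + W r = (n0+n1)*(Y q + W q) - (eta r + omega r)"
    using YS[of q] rq by (simp add: algebra_simps)
  then have "(n0+n1)*(Y q + W q) > 0" using Yr rpos by linarith
  then have C2: "Y q + W q > 0" using assms(1,2)
    by (metis add_pos_pos linorder_not_le mult_nonneg_nonpos order_less_imp_le not_le)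
  define y where "y l = (if l < r then Y l else 0)" for l
  define z where "z l = (if l < r then W l else 0)" for l
  show "\<exists>y z :: nat \<Rightarrow> int.
       (\<forall>l\<ge>1. y l \<le> n0 * y (l - 1) + n1 * z (l - 1) \<and> z l \<le> n1 * y (l - 1) + n0 * z (l - 1)) \<and>
       y (r - 1) + z (r - 1) > 0 \<and>
       (\<forall>l\<ge>r. y l = 0 \<and> z l = 0) \<and>
       y 0 = 1 \<and> z 0 = 0 \<and>
       (\<forall>l. min (y l) (z l) < 0 \<longleftrightarrow> l \<in> Z)"
  proof (intro exI conjI allI impI)
    fix l :: nat assume l1: "1 \<le> l"
    then obtain k where lk: "l = Suc k" by (cases l) auto
    have "y l \<le> n0 * y (l - 1) + n1 * z (l - 1) \<and> z l \<le> n1 * y (l - 1) + n0 * z (l - 1)"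
    proof (cases "l < r")
      case True
      then show ?thesis using YS[of k] nn[OF l1] lk by (simp add: y_def z_def)
    next
      case False
      show ?thesis
      proof (cases "l = r")
        case True
        then show ?thesis using YS[of q] Yr rq nn[of r] by (simp add: y_def z_def)
      next
        case False
        then show ?thesis using \<open>\<not> l < r\<close> lk by (simp add: y_def z_def)
      qed
    qed
    then show "y l \<le> n0 * y (l - 1) + n1 * z (l - 1)" "z l \<le> n1 * y (l - 1) + n0 * z (l - 1)"
      by auto
  next
    show "y (r - 1) + z (r - 1) > 0" using C2 rq by (simp add: y_def z_def)
  next
    fix l assume "r \<le> l" then show "y l = 0" "z l = 0" by (auto simp: y_def z_def)
  next
    show "y 0 = 1" "z 0 = 0" using Y0 assms(3) by (auto simp: y_def z_def)
  next
    fix l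
    show "min (y l) (z l) < 0 \<longleftrightarrow> l \<in> Z"
    proof (cases "l \<in> {1..r-1}")
      case True
      then have "l < r" by auto
      then have "(\<not> (Kplus eta omega n0 n1 l \<ge> \<bar>Kminus eta omega n0 n1 l\<bar>)) \<longleftrightarrow> l \<in> Z"
        using cz True by blast
      then show ?thesis using \<open>l < r\<close> K[of l] minlt[of "Y l" "W l"] by (simp add: y_def z_def)
    next
      case False
      then have "l \<notin> Z" using assms(4) by auto
      moreover have "l = 0 \<or> l \<ge> r" using False by auto
      ultimately show ?thesis using Y0 assms(3) by (auto simp: y_def z_def)
    qed
  qed
next
  assume "\<exists>y z :: nat \<Rightarrow> int.
       (\<forall>l\<ge>1. y l \<le> n0 * y (l - 1) + n1 * z (l - 1) \<and> z l \<le> n1 * y (l - 1) + n0 * z (l - 1)) \<and>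
       y (r - 1) + z (r - 1) > 0 \<and>
       (\<forall>l\<ge>r. y l = 0 \<and> z l = 0) \<and>
       y 0 = 1 \<and> z 0 = 0 \<and>
       (\<forall>l. min (y l) (z l) < 0 \<longleftrightarrow> l \<in> Z)"
  then obtain y z :: "nat \<Rightarrow> int" where
    c1: "\<forall>l\<ge>1. y l \<le> n0 * y (l - 1) + n1 * z (l - 1) \<and> z l \<le> n1 * y (l - 1) + n0 * z (l - 1)"
    and c2: "y (r - 1) + z (r - 1) > 0"
    and c3: "\<forall>l\<ge>r. y l = 0 \<and> z l = 0"
    and c4: "y 0 = 1" "z 0 = 0"
    and c5: "\<forall>l. min (y l) (z l) < 0 \<longleftrightarrow> l \<in> Z" by blast
  define eta where "eta l = (if l \<ge> 1 then n0*y(l-1)+n1*z(l-1) - y l else 0)" for l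
  define omega where "omega l = (if l \<ge> 1 then n1*y(l-1)+n0*z(l-1) - z l else 0)" for l
  have K: "Kplus eta omega n0 n1 l = y l + z l \<and> Kminus eta omega n0 n1 l = y l - z l" for l
    by (rule KYZ[where y=y and z=z, OF c4]) (auto simp: eta_def omega_def)
  have big: "eta l = 0 \<and> omega l = 0" if "l > r" for l
    using c3 that by (auto simp: eta_def omega_def)
  have sub: "supp1 eta \<subseteq> {1..r}" "supp1 omega \<subseteq> {1..r}"
    using big by (auto simp: supp1_def) (meson not_le)+
  have vp: "valid_pair eta omega"
    unfolding valid_pair_def using c1 sub finite_subset[OF sub(1)] finite_subset[OF sub(2)]
    by (auto simp: eta_def omega_def)
  have "eta r + omega r = (n0+n1)*(y (r-1) + z (r-1))"
    using c3 assms(3) by (simp add: eta_def omega_def algebra_simps)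
  also have "\<dots> > 0" using c2 assms(1,2) by simp
  finally have "eta r \<noteq> 0 \<or> omega r \<noteq> 0" by linarith
  then have "r \<in> supp1 eta \<union> supp1 omega" using assms(3) by (auto simp: supp1_def)
  then have rk: "rank_is eta omega r" using sub unfolding rank_is_def by auto
  show "admissible n0 n1 r Z"
    unfolding admissible_def
  proof (intro conjI exI)
    show "Z \<subseteq> {1..r-1}" by fact
    show "valid_pair eta omega" by fact
    show "rank_is eta omega r" by fact
    show "Kplus eta omega n0 n1 r = 0" "Kminus eta omega n0 n1 r = 0" using K[of r] c3 by auto
    show "\<forall>l\<in>{1..r-1}. (\<not> (Kplus eta omega n0 n1 l \<ge> \<bar>Kminus eta omega n0 n1 l\<bar>)) \<longleftrightarrow> l \<in> Z"
      using K c5 minlt by auto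
  qed
qed

end
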